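(* Let $\mathcal N$ be an occurrence net, $C$ a cut of $\mathcal N$ and $c\in C$. Then $\mathit{LKC}(c)\subseteq\lfloor C\rfloor$, where $\mathit{LKC}(c)=\{p\in\mathcal P\mid p\not<c\ \text{and}\ t<c\text{ for all }t\in{}^\bullet p\}$.
   Context: A Petri net $(\mathcal P,\mathcal T,\mathcal F,\mathit{In})$ has disjoint places $\mathcal P$ and transitions $\mathcal T$, a flow relation $\mathcal F$ that is a multiset over $(\mathcal P\times\mathcal T)\cup(\mathcal T\times\mathcal P)$, and a finite multiset $\mathit{In}$ over $\mathcal P$; ${}^\bullet x(y)=\mathcal F(y,x)$, $x^\bullet(y)=\mathcal F(x,y)$, and every transition has finite nonempty pre- and postcondition. Let $<$ be the transitive closure of $\{(x,y)\mid\mathcal F(x,y)>0\}$ and $\le$ its reflexive-transitive closure; the causal past of a set $S$ of nodes is $\lfloor S\rfloor=\{y\mid y\le x\text{ for some }x\in S\}$. Nodes $x,y$ are in conflict if there is a place $p\ne x,y$ and distinct transitions $t_1,t_2\in p^\bullet$ with $t_1\le x$ and $t_2\le y$; they are concurrent if neither $x\le y$ nor $y\le x$ nor in conflict. An occurrence net is a Petri net in which pre- and postconditions of transitions are sets, every place has at most one incoming transition, $\mathit{In}=\{p\mid{}^\bullet p=\emptyset\}$, $\mathcal F^{-1}$ is well-founded, and no transition is in conflict with itself. A cut is a maximal set of pairwise concurrent places. *)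

theory Defs
  imports Main "HOL-Library.Multiset"
begin

(* A Petri net over a node type 'a: places P, transitions T (disjoint),
   flow multiset F :: ('a * 'a) => nat (possibly infinite support),
   initial marking In, a finite multiset over P. *)

definition petri_net :: "'a set \<Rightarrow> 'a set \<Rightarrow> ('a \<times> 'a \<Rightarrow> nat) \<Rightarrow> 'a multiset \<Rightarrow> bool" where
  "petri_net P T F In \<longleftrightarrow>
     P \<inter> T = {} \<and>
     (\<forall>x y. F (x, y) > 0 \<longrightarrow> (x \<in> P \<and> y \<in> T) \<or> (x \<in> T \<and> y \<in> P)) \<and>
     set_mset In \<subseteq> P \<and>
     (\<forall>t\<in>T. finite {p. F (p, t) > 0} \<and> {p. F (p, t) > 0} \<noteq> {} \<and>
              finite {p. F (t, p) > 0} \<and> {p. F (t, p) > 0} \<noteq> {})"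

definition flow_rel :: "('a \<times> 'a \<Rightarrow> nat) \<Rightarrow> ('a \<times> 'a) set" where
  "flow_rel F = {(x, y). F (x, y) > 0}"

definition causal_lt :: "('a \<times> 'a \<Rightarrow> nat) \<Rightarrow> 'a \<Rightarrow> 'a \<Rightarrow> bool" where
  "causal_lt F x y \<longleftrightarrow> (x, y) \<in> (flow_rel F)\<^sup>+"

definition causal_le :: "('a \<times> 'a \<Rightarrow> nat) \<Rightarrow> 'a \<Rightarrow> 'a \<Rightarrow> bool" where
  "causal_le F x y \<longleftrightarrow> (x, y) \<in> (flow_rel F)\<^sup>*"

definition causal_past :: "('a \<times> 'a \<Rightarrow> nat) \<Rightarrow> 'a set \<Rightarrow> 'a set" where
  "causal_past F S = {y. \<exists>x\<in>S. causal_le F y x}"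

definition in_conflict :: "'a set \<Rightarrow> 'a set \<Rightarrow> ('a \<times> 'a \<Rightarrow> nat) \<Rightarrow> 'a \<Rightarrow> 'a \<Rightarrow> bool" where
  "in_conflict P T F x y \<longleftrightarrow>
     (\<exists>p\<in>P. p \<noteq> x \<and> p \<noteq> y \<and>
        (\<exists>t1 t2. t1 \<in> T \<and> t2 \<in> T \<and> t1 \<noteq> t2 \<and> F (p, t1) > 0 \<and> F (p, t2) > 0 \<and>
                 causal_le F t1 x \<and> causal_le F t2 y))"

definition concurrent :: "'a set \<Rightarrow> 'a set \<Rightarrow> ('a \<times> 'a \<Rightarrow> nat) \<Rightarrow> 'a \<Rightarrow> 'a \<Rightarrow> bool" where
  "concurrent P T F x y \<longleftrightarrow>
     \<not> causal_le F x y \<and> \<not> causal_le F y x \<and> \<not> in_conflict P T F x y"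

definition occurrence_net :: "'a set \<Rightarrow> 'a set \<Rightarrow> ('a \<times> 'a \<Rightarrow> nat) \<Rightarrow> 'a multiset \<Rightarrow> bool" where
  "occurrence_net P T F In \<longleftrightarrow>
     petri_net P T F In \<and>
     (\<forall>t\<in>T. \<forall>p. F (p, t) \<le> 1 \<and> F (t, p) \<le> 1) \<and>
     (\<forall>p\<in>P. \<forall>t1 t2. F (t1, p) > 0 \<and> F (t2, p) > 0 \<longrightarrow> t1 = t2) \<and>
     (\<forall>p. count In p = (if p \<in> P \<and> (\<forall>t. F (t, p) = 0) then 1 else 0)) \<and>
     wf (flow_rel F) \<and>
     (\<forall>t\<in>T. \<not> in_conflict P T F t t)"

definition pairwise_concurrent :: "'a set \<Rightarrow> 'a set \<Rightarrow> ('a \<times> 'a \<Rightarrow> nat) \<Rightarrow> 'a set \<Rightarrow> bool" where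
  "pairwise_concurrent P T F S \<longleftrightarrow> (\<forall>x\<in>S. \<forall>y\<in>S. x \<noteq> y \<longrightarrow> concurrent P T F x y)"

definition is_cut :: "'a set \<Rightarrow> 'a set \<Rightarrow> ('a \<times> 'a \<Rightarrow> nat) \<Rightarrow> 'a set \<Rightarrow> bool" where
  "is_cut P T F C \<longleftrightarrow>
     C \<subseteq> P \<and> pairwise_concurrent P T F C \<and>
     (\<forall>D. D \<subseteq> P \<and> pairwise_concurrent P T F D \<and> C \<subseteq> D \<longrightarrow> D = C)"

definition LKC :: "'a set \<Rightarrow> ('a \<times> 'a \<Rightarrow> nat) \<Rightarrow> 'a \<Rightarrow> 'a set" where
  "LKC P F c = {p \<in> P. \<not> causal_lt F p c \<and> (\<forall>t. F (t, p) > 0 \<longrightarrow> causal_lt F t c)}"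

end

theory Submission
  imports Defs
begin

lemma conflict_sym: "in_conflict P T F x y \<Longrightarrow> in_conflict P T F y x"
  unfolding in_conflict_def by blast

lemma concurrent_sym: "concurrent P T F x y \<Longrightarrow> concurrent P T F y x"
  unfolding concurrent_def by (metis conflict_sym)

lemma lkc_lt:
  assumes "p \<in> LKC P F c" "(x, p) \<in> (flow_rel F)\<^sup>+"
  shows "(x, c) \<in> (flow_rel F)\<^sup>+"
proof -
  obtain z where z: "(x, z) \<in> (flow_rel F)\<^sup>*" "(z, p) \<in> flow_rel F"
    using tranclD2[OF assms(2)] by blast
  have "F (z, p) > 0" using z(2) by (simp add: flow_rel_def)
  hence "(z, c) \<in> (flow_rel F)\<^sup>+" using assms(1) by (simp add: LKC_def causal_lt_def)
  thus ?thesis using z(1) by simp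
qed

lemma le_neq_lt: "causal_le F x y \<Longrightarrow> x \<noteq> y \<Longrightarrow> (x, y) \<in> (flow_rel F)\<^sup>+"
  unfolding causal_le_def by (simp add: rtrancl_eq_or_trancl)

theorem mainTheorem17:
  fixes P T :: "'a set" and F :: "'a \<times> 'a \<Rightarrow> nat" and In :: "'a multiset"
    and C :: "'a set" and c :: 'a
  assumes "occurrence_net P T F In"
    and "is_cut P T F C"
    and "c \<in> C"
  shows "LKC P F c \<subseteq> causal_past F C"
proof
  fix p assume pL: "p \<in> LKC P F c"
  have pP: "p \<in> P" using pL by (simp add: LKC_def)
  have disj: "P \<inter> T = {}" and fl: "\<forall>x y. F (x, y) > 0 \<longrightarrow> (x \<in> P \<and> y \<in> T) \<or> (x \<in> T \<and> y \<in> P)"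
    using assms(1) by (auto simp: occurrence_net_def petri_net_def)
  have uniq: "\<forall>p\<in>P. \<forall>t1 t2. F (t1, p) > 0 \<and> F (t2, p) > 0 \<longrightarrow> t1 = t2"
    and noself: "\<forall>t\<in>T. \<not> in_conflict P T F t t"
    and wf: "wf (flow_rel F)"
    using assms(1) by (auto simp: occurrence_net_def)
  have acyc: "\<And>x. (x, x) \<notin> (flow_rel F)\<^sup>+"
    using wf_acyclic[OF wf] by (simp add: acyclic_def)
  have CP: "C \<subseteq> P" and pc: "pairwise_concurrent P T F C"
    and maxi: "\<forall>D. D \<subseteq> P \<and> pairwise_concurrent P T F D \<and> C \<subseteq> D \<longrightarrow> D = C"
    using assms(2) by (auto simp: is_cut_def)
  have cP: "c \<in> P" using CP assms(3) by blast
  show "p \<in> causal_past F C"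
  proof (cases "p \<in> C")
    case True
    thus ?thesis by (auto simp: causal_past_def causal_le_def)
  next
    case False
    have "\<not> pairwise_concurrent P T F (insert p C)"
      using maxi[rule_format, of "insert p C"] pP CP False by auto
    then obtain x y where xy: "x \<in> insert p C" "y \<in> insert p C" "x \<noteq> y" "\<not> concurrent P T F x y"
      unfolding pairwise_concurrent_def by blast
    have "\<exists>d\<in>C. \<not> concurrent P T F p d"
    proof (cases "x = p")
      case True
      hence "y \<in> C" using xy by auto
      thus ?thesis using xy True by blast
    next
      case False
      hence xC: "x \<in> C" using xy by auto
      show ?thesis
      proof (cases "y = p")
        case True
        hence "\<not> concurrent P T F p x" using xy concurrent_sym by metis
        thus ?thesis using xC by blast
      next
        case False
        hence "y \<in> C" using xy by auto
        thus ?thesis using xC xy pc unfolding pairwise_concurrent_def by blast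
      qed
    qed
    then obtain d where dC: "d \<in> C" and nc: "\<not> concurrent P T F p d" by blast
    have pd: "p \<noteq> d" using dC False by blast
    consider "causal_le F p d" | "causal_le F d p" | "in_conflict P T F p d"
      using nc unfolding concurrent_def by blast
    thus ?thesis
    proof cases
      case 1 thus ?thesis using dC by (auto simp: causal_past_def)
    next
      case 2
      hence "(d, p) \<in> (flow_rel F)\<^sup>+" using pd le_neq_lt by metis
      hence dc: "(d, c) \<in> (flow_rel F)\<^sup>+" using lkc_lt[OF pL] by blast
      show ?thesis
      proof (cases "d = c")
        case True thus ?thesis using dc acyc by blast
      next
        case False
        hence "concurrent P T F d c" using pc dC assms(3) unfolding pairwise_concurrent_def by blast
        thus ?thesis using dc unfolding concurrent_def causal_le_def by (meson trancl_into_rtrancl)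
      qed
    next
      case 3
      then obtain q t1 t2 where q: "q \<in> P" "q \<noteq> p" "q \<noteq> d" "t1 \<in> T" "t2 \<in> T" "t1 \<noteq> t2"
        "F (q, t1) > 0" "F (q, t2) > 0" "causal_le F t1 p" "causal_le F t2 d"
        unfolding in_conflict_def by blast
      have "t1 \<noteq> p" using q(4) pP disj by blast
      hence "(t1, p) \<in> (flow_rel F)\<^sup>+" using q(9) le_neq_lt by metis
      hence t1c: "(t1, c) \<in> (flow_rel F)\<^sup>+" using lkc_lt[OF pL] by blast
      have qc: "q \<noteq> c"
      proof
        assume "q = c"
        hence "(c, t1) \<in> flow_rel F" using q(7) by (simp add: flow_rel_def)
        thus False using t1c acyc by (meson trancl_into_trancl2)
      qed
      show ?thesis
      proof (cases "d = c")
        case False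
        hence "c \<noteq> d" by simp
        hence "concurrent P T F c d" using pc dC assms(3) unfolding pairwise_concurrent_def by simp
        moreover have "causal_le F t1 c" using t1c by (simp add: causal_le_def)
        moreover have "in_conflict P T F c d"
          unfolding in_conflict_def
          apply (rule bexI[of _ q])
          using q(1) q(3-10) qc \<open>causal_le F t1 c\<close> by auto
        ultimately show ?thesis unfolding concurrent_def by blast
      next
        case True
        have "t2 \<noteq> c" using q(5) cP disj by blast
        moreover have "causal_le F t2 c" using q(10) True by simp
        ultimately have t2c: "(t2, c) \<in> (flow_rel F)\<^sup>+"
          using le_neq_lt by metis
        obtain z1 where z1: "(t1, z1) \<in> (flow_rel F)\<^sup>*" "(z1, c) \<in> flow_rel F"
          using tranclD2[OF t1c] by blast
        obtain z2 where z2: "(t2, z2) \<in> (flow_rel F)\<^sup>*" "(z2, c) \<in> flow_rel F"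
          using tranclD2[OF t2c] by blast
        have f1: "F (z1, c) > 0" using z1(2) by (simp add: flow_rel_def)
        have f2: "F (z2, c) > 0" using z2(2) by (simp add: flow_rel_def)
        have z12: "z1 = z2" using uniq cP f1 f2 by blast
        have "(z1 \<in> P \<and> c \<in> T) \<or> (z1 \<in> T \<and> c \<in> P)" using fl f1 by blast
        hence z1T: "z1 \<in> T" using cP disj by blast
        have qz: "q \<noteq> z1" using q(1) z1T disj by blast
        have l1: "causal_le F t1 z1" using z1(1) by (simp add: causal_le_def)
        have l2: "causal_le F t2 z1" using z2(1) z12 by (simp add: causal_le_def)
        have "in_conflict P T F z1 z1"
          unfolding in_conflict_def
          apply (rule bexI[of _ q])
          using qz q(1) q(4-8) l1 l2 by auto
        thus ?thesis using noself z1T by blast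
      qed
    qed
  qed
qed

end
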